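(* Let $\Omega>0$, let $V_0,V_1$ be column indices of $X\in\mathbb{R}^{K\times d}$ with $X[i,V_0],X[i,V_1]\in[-\Omega,\Omega]$ for all $i\in[K]$, let $C$ be a column index with $X[i,C]\in\{0,1\}$ for all $i\in[K]$, and let $E$ be a target column index. Then there exists a single transformer layer that simulates the selection operation: for every $i\in[K]$, it writes $X[i,V_1]$ into entry $(i,E)$ if $X[i,C]=1$, and writes $X[i,V_0]$ into entry $(i,E)$ otherwise.
   Context: Conventions: rows/columns indexed from $1$; $X[i,j]$ is the $(i,j)$ entry. $\phi(x)=\max\{x,0\}$ entrywise. Hardmax $\sigma$: row $i$ of $\sigma(\Phi)$ is $\frac{1}{|S_i|}\sum_{k\in S_i}e_k$, $S_i=\{k:\Phi_{ik}=\max_j\Phi_{ij}\}$. For a weighted hypergraph with incident matrix $A\in\mathbb{R}^{n_v\times n_e}$ ($A_{ij}=w(e_j)$ if vertex $v_i$ lies in hyperedge $e_j$, else $0$) and $K\ge\max\{n_v,n_e\}+1$, the padded incident matrix $\widetilde A\in\mathbb{R}^{K\times K}$ has $\widetilde A_{i+1,j+1}=A_{ij}$ and zeros elsewhere. A transformer layer acting on $X\in\mathbb{R}^{K\times d}$ is $f(X,\widetilde A)=f_{\mathrm{mlp}}(f_{\mathrm{attn}}(X,\widetilde A))$, where $f_{\mathrm{attn}}(X,\widetilde A)=\sum_{i\in M_A}\psi^{(i)}(X,\widetilde A)+\sum_{i\in M_{A^\top}}\psi^{(i)}(X,\widetilde A^\top)+\sum_{i\in M}\psi^{(i)}(X,I_K)+X$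 with heads $\psi(X,B)=B\,\sigma(XW_QW_K^\top X^\top)XW_V$ ($W_Q,W_K\in\mathbb{R}^{d\times2}$, $W_V\in\mathbb{R}^{d\times d}$), and $f_{\mathrm{mlp}}(X)=Z^{(4)}W^{(4)}+X$ with $Z^{(1)}=X$, $Z^{(j+1)}=\phi(Z^{(j)}W^{(j)})$ for $j=1,2,3$, $W^{(j)}\in\mathbb{R}^{d\times d}$. Storage convention: scalars are stored in the top row of a column (other entries $0$), arrays of length $K-1$ in rows $2,\dots,K$ (top entry $0$); $X$ contains designated columns $B_{\mathrm{global}}$ (top entry $1$, others $0$), $B_{\mathrm{local}}$ (top entry $0$, others $1$), and may contain scratchpad columns. "Simulating an operation" means the layer's weights can be chosen so that applying the layer to $X$ performs the stated update. *)

theory Defs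
  imports Complex_Main
begin

text \<open>Matrices are functions nat => nat => real, indexed from 1; only the entries
  in the relevant index ranges matter.\<close>

type_synonym mat = "nat \<Rightarrow> nat \<Rightarrow> real"

definition mmul :: "nat \<Rightarrow> mat \<Rightarrow> mat \<Rightarrow> mat" where
  "mmul n A B = (\<lambda>i j. \<Sum>k=1..n. A i k * B k j)"

definition mtrans :: "mat \<Rightarrow> mat" where
  "mtrans A = (\<lambda>i j. A j i)"

definition madd :: "mat \<Rightarrow> mat \<Rightarrow> mat" where
  "madd A B = (\<lambda>i j. A i j + B i j)"

definition mzero :: mat where
  "mzero = (\<lambda>i j. 0)"

definition idm :: mat where
  "idm = (\<lambda>i j. if i = j then 1 else 0)"

definition relu :: "mat \<Rightarrow> mat" where
  "relu A = (\<lambda>i j. max (A i j) 0)"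

definition argmax_set :: "nat \<Rightarrow> mat \<Rightarrow> nat \<Rightarrow> nat set" where
  "argmax_set K P i = {k \<in> {1..K}. P i k = Max ((\<lambda>j. P i j) ` {1..K})}"

definition hardmax :: "nat \<Rightarrow> mat \<Rightarrow> mat" where
  "hardmax K P = (\<lambda>i k. if k \<in> argmax_set K P i then 1 / real (card (argmax_set K P i)) else 0)"

text \<open>Attention head psi(X,B) = B sigma(X W_Q W_K^T X^T) X W_V, X in R^{K x d},
  W_Q, W_K in R^{d x 2}, W_V in R^{d x d}, B in R^{K x K}.\<close>
definition head :: "nat \<Rightarrow> nat \<Rightarrow> mat \<times> mat \<times> mat \<Rightarrow> mat \<Rightarrow> mat \<Rightarrow> mat" where
  "head K d W X B = (case W of (WQ, WK, WV) \<Rightarrow>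
     mmul K B (mmul d (mmul K (hardmax K
        (mmul d (mmul 2 (mmul d X WQ) (mtrans WK)) (mtrans X))) X) WV))"

definition sum_heads :: "nat \<Rightarrow> nat \<Rightarrow> (mat \<times> mat \<times> mat) list \<Rightarrow> mat \<Rightarrow> mat \<Rightarrow> mat" where
  "sum_heads K d hs X B = foldr (\<lambda>W acc. madd (head K d W X B) acc) hs mzero"

record tlayer =
  heads_A  :: "(mat \<times> mat \<times> mat) list"
  heads_AT :: "(mat \<times> mat \<times> mat) list"
  heads_I  :: "(mat \<times> mat \<times> mat) list"
  W1 :: mat
  W2 :: mat
  W3 :: mat
  W4 :: mat

definition f_attn :: "nat \<Rightarrow> nat \<Rightarrow> tlayer \<Rightarrow> mat \<Rightarrow> mat \<Rightarrow> mat" where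
  "f_attn K d L X A =
     madd (sum_heads K d (heads_A L) X A)
      (madd (sum_heads K d (heads_AT L) X (mtrans A))
       (madd (sum_heads K d (heads_I L) X idm) X))"

definition f_mlp :: "nat \<Rightarrow> tlayer \<Rightarrow> mat \<Rightarrow> mat" where
  "f_mlp d L X =
     (let Z2 = relu (mmul d X (W1 L));
          Z3 = relu (mmul d Z2 (W2 L));
          Z4 = relu (mmul d Z3 (W3 L))
      in madd (mmul d Z4 (W4 L)) X)"

definition f_layer :: "nat \<Rightarrow> nat \<Rightarrow> tlayer \<Rightarrow> mat \<Rightarrow> mat \<Rightarrow> mat" where
  "f_layer K d L X A = f_mlp d L (f_attn K d L X A)"

definition padded :: "nat \<Rightarrow> mat \<Rightarrow> bool" where
  "padded K A = (\<forall>j\<in>{1..K}. A 1 j = 0 \<and> A j 1 = 0)"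

end

theory Submission
  imports Defs
begin

definition ind :: "nat \<Rightarrow> nat \<Rightarrow> real" where
  "ind j k = (if k = j then 1 else 0)"

lemma sum_ind: "j \<in> {1..d} \<Longrightarrow> (\<Sum>k=1..d. f k * ind j k) = f j"
  by (simp add: ind_def if_distrib sum.delta cong: if_cong)

lemma sum_ind_c: "j \<in> {1..d} \<Longrightarrow> (\<Sum>k=1..d. f k * (c * ind j k)) = c * f j"
  using sum_ind[of j d "\<lambda>k. c * f k"] by (simp add: mult.assoc mult.left_commute)

lemma sum_idm: "h \<in> {1..d} \<Longrightarrow> (\<Sum>k=1..d. f k * idm k h) = f h"
  by (simp add: idm_def if_distrib sum.delta cong: if_cong)

lemma mmul_idm: "h \<in> {1..d} \<Longrightarrow> mmul d M idm i h = M i h"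
  unfolding mmul_def by (rule sum_idm)

lemma layer_eval:
  assumes "j \<in> {1..d}"
  shows "f_layer K d \<lparr>heads_A = [], heads_AT = [], heads_I = [], W1 = P, W2 = idm, W3 = idm, W4 = Q\<rparr> X A i j
    = (\<Sum>h=1..d. max (\<Sum>k=1..d. X i k * P k h) 0 * Q h j) + X i j"
proof -
  have attn: "f_attn K d \<lparr>heads_A = [], heads_AT = [], heads_I = [], W1 = P, W2 = idm, W3 = idm, W4 = Q\<rparr> X A = X"
    by (simp add: f_attn_def sum_heads_def madd_def mzero_def)
  have z: "\<And>h. h \<in> {1..d} \<Longrightarrow>
     relu (mmul d (relu (mmul d (relu (mmul d X P)) idm)) idm) i h = max (\<Sum>k=1..d. X i k * P k h) 0"
    by (simp add: mmul_idm relu_def) (simp add: mmul_def)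
  define Z where "Z = relu (mmul d (relu (mmul d (relu (mmul d X P)) idm)) idm)"
  have "f_layer K d \<lparr>heads_A = [], heads_AT = [], heads_I = [], W1 = P, W2 = idm, W3 = idm, W4 = Q\<rparr> X A i j
     = mmul d Z Q i j + X i j"
    unfolding f_layer_def attn by (simp add: f_mlp_def Let_def madd_def Z_def)
  also have "mmul d Z Q i j = (\<Sum>h=1..d. Z i h * Q h j)" by (simp add: mmul_def)
  also have "... = (\<Sum>h=1..d. max (\<Sum>k=1..d. X i k * P k h) 0 * Q h j)"
    by (rule sum.cong) (simp_all only: Z_def z)
  finally show ?thesis .
qed

lemma big_case:
  fixes K d :: nat and \<Omega> :: real and V0 V1 C E Bg Bl :: nat
  assumes "\<Omega> > 0" and d3: "3 \<le> d"
    and "V0 \<in> {1..d}" "V1 \<in> {1..d}" "C \<in> {1..d}" "E \<in> {1..d}"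
    and "Bg \<in> {1..d}" "Bl \<in> {1..d}"
  shows "\<exists>L :: tlayer. \<forall>X A.
     ((\<forall>i\<in>{1..K}. \<bar>X i V0\<bar> \<le> \<Omega> \<and> \<bar>X i V1\<bar> \<le> \<Omega> \<and> (X i C = 0 \<or> X i C = 1))
      \<and> (\<forall>i\<in>{1..K}. X i Bg = (if i = 1 then 1 else 0))
      \<and> (\<forall>i\<in>{1..K}. X i Bl = (if i = 1 then 0 else 1))
      \<and> padded K A)
     \<longrightarrow> (\<forall>i\<in>{1..K}. \<forall>j\<in>{1..d}.
           f_layer K d L X A i j =
             (if j = E then (if X i C = 1 then X i V1 else X i V0) else X i j))"
proof -
  define P :: mat where "P = (\<lambda>k h. if h = 1 then ind E k - ind V0 k + 2*\<Omega>*ind C k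
     else if h = 2 then ind V0 k - ind E k - 2*\<Omega>*ind C k
     else if h = 3 then ind V1 k - ind V0 k + 4*\<Omega>*ind C k - 2*\<Omega>*ind Bg k - 2*\<Omega>*ind Bl k
     else (0::real))"
  define Q :: mat where "Q = (\<lambda>h j. if j = E then ind 3 h + ind 2 h - ind 1 h else (0::real))"
  have h123: "(1::nat) \<in> {1..d}" "(2::nat) \<in> {1..d}" "(3::nat) \<in> {1..d}" using d3 by auto
  show ?thesis
  proof (rule exI[of _ "\<lparr>heads_A = [], heads_AT = [], heads_I = [], W1 = P, W2 = idm, W3 = idm, W4 = Q\<rparr>"],
      intro allI impI ballI, elim conjE)
    fix X :: mat and A :: mat and i j
    assume bd: "\<forall>i\<in>{1..K}. \<bar>X i V0\<bar> \<le> \<Omega> \<and> \<bar>X i V1\<bar> \<le> \<Omega> \<and> (X i C = 0 \<or> X i C = 1)"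
      and g: "\<forall>i\<in>{1..K}. X i Bg = (if i = 1 then 1 else 0)"
      and l: "\<forall>i\<in>{1..K}. X i Bl = (if i = 1 then 0 else 1)"
      and i: "i \<in> {1..K}" and j: "j \<in> {1..d}"
    have one: "X i Bg + X i Bl = 1" using g l i by auto
    have bi: "\<bar>X i V0\<bar> \<le> \<Omega>" "\<bar>X i V1\<bar> \<le> \<Omega>" "X i C = 0 \<or> X i C = 1" using bd i by auto
    define m where "m = (\<lambda>h. max (\<Sum>k=1..d. X i k * P k h) 0)"
    have s1: "(\<Sum>k=1..d. X i k * P k 1) = X i E - X i V0 + 2*\<Omega>*X i C"
      unfolding P_def using sum_ind[of _ d "X i"] sum_ind_c[of _ d "X i"] assms(3-8)
      by (simp add: sum.distrib sum_subtractf right_diff_distrib distrib_left)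
    have s2: "(\<Sum>k=1..d. X i k * P k 2) = X i V0 - X i E - 2*\<Omega>*X i C"
      unfolding P_def using sum_ind[of _ d "X i"] sum_ind_c[of _ d "X i"] assms(3-8)
      by (simp add: sum.distrib sum_subtractf right_diff_distrib distrib_left)
    have s3: "(\<Sum>k=1..d. X i k * P k 3) = X i V1 - X i V0 + 4*\<Omega>*X i C - 2*\<Omega>*X i Bg - 2*\<Omega>*X i Bl"
      unfolding P_def using sum_ind[of _ d "X i"] sum_ind_c[of _ d "X i"] assms(3-8)
      by (simp add: sum.distrib sum_subtractf right_diff_distrib distrib_left)
    have out: "f_layer K d \<lparr>heads_A = [], heads_AT = [], heads_I = [], W1 = P, W2 = idm, W3 = idm, W4 = Q\<rparr> X A i j
       = (\<Sum>h=1..d. m h * Q h j) + X i j"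
      unfolding m_def by (rule layer_eval[OF j])
    show "f_layer K d \<lparr>heads_A = [], heads_AT = [], heads_I = [], W1 = P, W2 = idm, W3 = idm, W4 = Q\<rparr> X A i j =
         (if j = E then (if X i C = 1 then X i V1 else X i V0) else X i j)"
    proof (cases "j = E")
      case False
      then show ?thesis using out by (simp add: Q_def)
    next
      case True
      have "(\<Sum>h=1..d. m h * Q h j) = m 3 + m 2 - m 1"
        unfolding Q_def using True sum_ind[of _ d m] h123
        by (simp add: sum.distrib sum_subtractf right_diff_distrib distrib_left)
      also have "... = max (X i V1 - X i V0 + 4*\<Omega>*X i C - 2*\<Omega>) 0 + X i V0 - X i E - 2*\<Omega>*X i C"
      proof -
        have s3': "(\<Sum>k=1..d. X i k * P k 3) = X i V1 - X i V0 + 4*\<Omega>*X i C - 2*\<Omega>"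
          unfolding s3 using one by (simp add: algebra_simps flip: distrib_left)
        have "max (- (X i E - X i V0 + 2*\<Omega>*X i C)) 0 - max (X i E - X i V0 + 2*\<Omega>*X i C) 0
           = - (X i E - X i V0 + 2*\<Omega>*X i C)" by (simp add: max_def)
        then show ?thesis unfolding m_def s1 s2 s3' by (simp add: algebra_simps)
      qed
      also have "... + X i j = (if X i C = 1 then X i V1 else X i V0)"
        using bi True by (auto simp: max_def abs_le_iff)
      finally show ?thesis using out True by simp
    qed
  qed
qed

lemma small_case:
  fixes K d :: nat and \<Omega> :: real and V0 V1 C E Bg Bl :: nat
  assumes "\<Omega> > 0" and d3: "d < 3"
    and "V0 \<in> {1..d}" "V1 \<in> {1..d}" "C \<in> {1..d}" "E \<in> {1..d}"
    and "Bg \<in> {1..d}" "Bl \<in> {1..d}"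
  shows "\<exists>L :: tlayer. \<forall>X A.
     ((\<forall>i\<in>{1..K}. \<bar>X i V0\<bar> \<le> \<Omega> \<and> \<bar>X i V1\<bar> \<le> \<Omega> \<and> (X i C = 0 \<or> X i C = 1))
      \<and> (\<forall>i\<in>{1..K}. X i Bg = (if i = 1 then 1 else 0))
      \<and> (\<forall>i\<in>{1..K}. X i Bl = (if i = 1 then 0 else 1))
      \<and> padded K A)
     \<longrightarrow> (\<forall>i\<in>{1..K}. \<forall>j\<in>{1..d}.
           f_layer K d L X A i j =
             (if j = E then (if X i C = 1 then X i V1 else X i V0) else X i j))"
proof -
  define r1 :: "nat \<Rightarrow> real" where "r1 = (\<lambda>c. if c = Bg then 1 else 0)"
  define r2 :: "nat \<Rightarrow> real" where "r2 = (\<lambda>c. if c = Bg then 0 else 1)"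
  define sel :: "(nat \<Rightarrow> real) \<Rightarrow> real" where "sel = (\<lambda>r. if r C = 1 then r V1 else r V0)"
  define \<alpha> where "\<alpha> = sel r1 - r1 E"
  define \<beta> where "\<beta> = sel r2 - r2 E"
  define Q :: mat where "Q = (\<lambda>h j. if j = E then \<alpha> * ind Bg h + \<beta> * ind Bl h else 0)"
  show ?thesis
  proof (rule exI[of _ "\<lparr>heads_A = [], heads_AT = [], heads_I = [], W1 = idm, W2 = idm, W3 = idm, W4 = Q\<rparr>"],
      intro allI impI ballI, elim conjE)
    fix X :: mat and A :: mat and i j
    assume g: "\<forall>i\<in>{1..K}. X i Bg = (if i = 1 then 1 else 0)"
      and l: "\<forall>i\<in>{1..K}. X i Bl = (if i = 1 then 0 else 1)"
      and i: "i \<in> {1..K}" and j: "j \<in> {1..d}"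
    have "(1::nat) \<in> {1..K}" using i by auto
    then have ne: "Bg \<noteq> Bl" using g l by force
    have cov: "\<And>c. c \<in> {1..d} \<Longrightarrow> c = Bg \<or> c = Bl" using ne d3 assms(7,8) by auto
    have row: "\<And>c. c \<in> {1..d} \<Longrightarrow> X i c = (if i = 1 then r1 c else r2 c)"
    proof -
      fix c assume c: "c \<in> {1..d}"
      have gi: "X i Bg = (if i = 1 then 1 else 0)" and li: "X i Bl = (if i = 1 then 0 else 1)"
        using g l i by auto
      show "X i c = (if i = 1 then r1 c else r2 c)"
        using cov[OF c] proof
        assume "c = Bg" then show ?thesis using gi by (simp add: r1_def r2_def)
      next
        assume "c = Bl" then show ?thesis using li ne by (simp add: r1_def r2_def)
      qed
    qed
    have pos: "\<And>c. c \<in> {1..d} \<Longrightarrow> X i c \<ge> 0" using row unfolding r1_def r2_def by auto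
    have mh: "\<And>h. h \<in> {1..d} \<Longrightarrow> max (\<Sum>k=1..d. X i k * idm k h) 0 = X i h"
      using sum_idm pos by simp
    define m where "m = (\<lambda>h. max (\<Sum>k=1..d. X i k * idm k h) 0)"
    have out: "f_layer K d \<lparr>heads_A = [], heads_AT = [], heads_I = [], W1 = idm, W2 = idm, W3 = idm, W4 = Q\<rparr> X A i j
       = (\<Sum>h=1..d. m h * Q h j) + X i j"
      unfolding m_def by (rule layer_eval[OF j])
    show "f_layer K d \<lparr>heads_A = [], heads_AT = [], heads_I = [], W1 = idm, W2 = idm, W3 = idm, W4 = Q\<rparr> X A i j =
         (if j = E then (if X i C = 1 then X i V1 else X i V0) else X i j)"
    proof (cases "j = E")
      case False
      then show ?thesis using out by (simp add: Q_def)
    next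
      case True
      have "(\<Sum>h=1..d. m h * Q h j) = \<alpha> * m Bg + \<beta> * m Bl"
        unfolding Q_def using True sum_ind_c[of _ d m] assms(7,8)
        by (simp add: sum.distrib distrib_left)
      also have "... = \<alpha> * X i Bg + \<beta> * X i Bl" unfolding m_def using mh assms(7,8) by simp
      finally have o2: "f_layer K d \<lparr>heads_A = [], heads_AT = [], heads_I = [], W1 = idm, W2 = idm, W3 = idm, W4 = Q\<rparr> X A i j
          = \<alpha> * X i Bg + \<beta> * X i Bl + X i E" using out True by simp
      have xg: "X i Bg = (if i = 1 then 1 else 0)" "X i Bl = (if i = 1 then 0 else 1)" using g l i by auto
      show ?thesis
      proof (cases "i = 1")
        case True
        then have "X i c = r1 c" if "c \<in> {1..d}" for c using row[OF that] by simp
        then show ?thesis using o2 \<open>j = E\<close> xg True ne assms(3-6)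
          unfolding \<alpha>_def sel_def by (simp add: r1_def)
      next
        case False
        then have "X i c = r2 c" if "c \<in> {1..d}" for c using row[OF that] by simp
        then show ?thesis using o2 \<open>j = E\<close> xg False ne assms(3-6)
          unfolding \<beta>_def sel_def by (simp add: r2_def)
      qed
    qed
  qed
qed



theorem lemmaC1:
  fixes K d :: nat and \<Omega> :: real and V0 V1 C E Bg Bl :: nat
  assumes "\<Omega> > 0"
    and "V0 \<in> {1..d}" "V1 \<in> {1..d}" "C \<in> {1..d}" "E \<in> {1..d}"
    and "Bg \<in> {1..d}" "Bl \<in> {1..d}"
  shows "\<exists>L :: tlayer. \<forall>X A.
     ((\<forall>i\<in>{1..K}. \<bar>X i V0\<bar> \<le> \<Omega> \<and> \<bar>X i V1\<bar> \<le> \<Omega> \<and> (X i C = 0 \<or> X i C = 1))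
      \<and> (\<forall>i\<in>{1..K}. X i Bg = (if i = 1 then 1 else 0))
      \<and> (\<forall>i\<in>{1..K}. X i Bl = (if i = 1 then 0 else 1))
      \<and> padded K A)
     \<longrightarrow> (\<forall>i\<in>{1..K}. \<forall>j\<in>{1..d}.
           f_layer K d L X A i j =
             (if j = E then (if X i C = 1 then X i V1 else X i V0) else X i j))"
  using big_case[OF assms(1) _ assms(2-7)] small_case[OF assms(1) _ assms(2-7)]
  by (cases "3 \<le> d") auto

end
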